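(* Let $d\in\mathbb{N}$ and $0<r<1/d$. Then the set $B(1,r)^d\subseteq\mathbb{C}$ is convex.
   Context: For $a\in\mathbb{C}$ and $r>0$, $B(a,r)$ denotes the open disk of radius $r$ centred at $a$, and $B(a,r)^d:=\{b_1b_2\cdots b_d : b_i\in B(a,r)\text{ for } i=1,\dots,d\}$ (the set of products of $d$ elements of the disk). *)

theory Defs
  imports "HOL-Analysis.Analysis"
begin

definition disk_pow :: "complex \<Rightarrow> real \<Rightarrow> nat \<Rightarrow> complex set" where
  "disk_pow a r d = {(\<Prod>i<d. b i) | b. \<forall>i<d. b i \<in> ball a r}"

end

theory Submission
  imports Defs
begin

lemma seg_convex:
  fixes E mu :: "complex \<Rightarrow> complex" and k :: complex
  assumes dE: "\<And>t. t \<in> {0..1} \<Longrightarrow> (E has_field_derivative E (of_real t) * mu (of_real t)) (at (of_real t))"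
    and dE1: "\<And>t. t \<in> {0..1} \<Longrightarrow> ((\<lambda>z. E z * mu z) has_field_derivative k * (mu (of_real t))^2 * E (of_real t)) (at (of_real t))"
    and bd: "\<And>t. t \<in> {0..1} \<Longrightarrow> cmod k * cmod (E (of_real t) - 1) \<le> cmod (E (of_real t))"
  shows "convex_on {0..1} (\<lambda>t. (cmod (E (of_real t) - 1))^2)"
proof -
  define e where "e = (\<lambda>t::real. E (of_real t))"
  define e1 where "e1 = (\<lambda>t::real. E (of_real t) * mu (of_real t))"
  define e2 where "e2 = (\<lambda>t::real. k * (mu (of_real t))^2 * E (of_real t))"
  have ve: "(e has_vector_derivative e1 t) (at t)" if "t \<in> {0..1}" for t
    unfolding e_def e1_def by (rule has_vector_derivative_real_field[OF dE[OF that]])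
  have ve1: "(e1 has_vector_derivative e2 t) (at t)" if "t \<in> {0..1}" for t
    unfolding e1_def e2_def using has_vector_derivative_real_field[OF dE1[OF that]] by simp
  define f' where "f' = (\<lambda>t. 2 * (Re (e t) - 1) * Re (e1 t) + 2 * Im (e t) * Im (e1 t))"
  define f'' where "f'' = (\<lambda>t. 2 * (Re (e1 t) * Re (e1 t)) + 2 * (Re (e t) - 1) * Re (e2 t)
       + 2 * (Im (e1 t) * Im (e1 t)) + 2 * Im (e t) * Im (e2 t))"
  have feq: "(\<lambda>t. (cmod (E (of_real t) - 1))^2) = (\<lambda>t. (Re (e t) - 1)^2 + (Im (e t))^2)"
    by (rule ext) (simp add: e_def cmod_power2)
  have "convex_on {0..1} (\<lambda>t. (Re (e t) - 1)^2 + (Im (e t))^2)"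
  proof (rule f''_ge0_imp_convex[where f'=f' and f''=f''])
    show "convex {0..1::real}" by simp
  next
    fix t :: real assume t: "t \<in> {0..1}"
    note r = has_field_derivative_Re[OF ve[OF t]] has_field_derivative_Im[OF ve[OF t]]
    show "((\<lambda>t. (Re (e t) - 1)^2 + (Im (e t))^2) has_real_derivative f' t) (at t)"
      unfolding f'_def
      by (rule derivative_eq_intros r refl | simp)+
  next
    fix t :: real assume t: "t \<in> {0..1}"
    note r = has_field_derivative_Re[OF ve[OF t]] has_field_derivative_Im[OF ve[OF t]]
      has_field_derivative_Re[OF ve1[OF t]] has_field_derivative_Im[OF ve1[OF t]]
    show "(f' has_real_derivative f'' t) (at t)"
      unfolding f'_def f''_def
      by (rule derivative_eq_intros r refl | simp)+
  next
    fix t :: real assume t: "t \<in> {0..1}"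
    have cs: "\<bar>Re (e t - 1) * Re (e2 t) + Im (e t - 1) * Im (e2 t)\<bar> \<le> cmod (e t - 1) * cmod (e2 t)"
    proof -
      have "Re (e t - 1) * Re (e2 t) + Im (e t - 1) * Im (e2 t) = Re (cnj (e t - 1) * e2 t)" by simp
      also have "\<bar>\<dots>\<bar> \<le> cmod (cnj (e t - 1) * e2 t)" by (rule abs_Re_le_cmod)
      also have "\<dots> = cmod (cnj (e t - 1)) * cmod (e2 t)" by (rule norm_mult)
      also have "\<dots> = cmod (e t - 1) * cmod (e2 t)" by (simp only: complex_mod_cnj)
      finally show ?thesis .
    qed
    have n1: "Re (e1 t) * Re (e1 t) + Im (e1 t) * Im (e1 t) = (cmod (e t))^2 * (cmod (mu (of_real t)))^2"
    proof -
      have "Re (e1 t) * Re (e1 t) + Im (e1 t) * Im (e1 t) = (cmod (e1 t))^2"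
        using cmod_power2[of "e1 t"] by (simp add: power2_eq_square)
      also have "\<dots> = (cmod (e t))^2 * (cmod (mu (of_real t)))^2"
        by (simp add: e1_def e_def norm_mult power_mult_distrib)
      finally show ?thesis .
    qed
    have n2: "cmod (e2 t) = cmod k * (cmod (mu (of_real t)))^2 * cmod (e t)"
      by (simp add: e2_def e_def norm_mult norm_power)
    have b: "cmod k * cmod (e t - 1) \<le> cmod (e t)" using bd[OF t] by (simp add: e_def)
    have "cmod (e t - 1) * cmod (e2 t) \<le> (cmod (e t))^2 * (cmod (mu (of_real t)))^2"
    proof -
      have "cmod (e t - 1) * cmod (e2 t) = (cmod k * cmod (e t - 1)) * ((cmod (mu (of_real t)))^2 * cmod (e t))"
        using n2 by simp
      also have "\<dots> \<le> cmod (e t) * ((cmod (mu (of_real t)))^2 * cmod (e t))"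
        by (rule mult_right_mono[OF b]) simp
      finally show ?thesis by (simp add: power2_eq_square mult_ac)
    qed
    then show "0 \<le> f'' t" using cs n1 unfolding f''_def by (simp add: algebra_simps abs_le_iff)
  qed
  then show ?thesis using feq by simp
qed

lemma two_param:
  fixes Phi :: "complex \<Rightarrow> real" and U :: "complex set" and g :: "real \<Rightarrow> complex"
  assumes U: "convex U" and cont: "continuous_on U Phi"
    and H: "\<And>y. y \<in> U \<Longrightarrow> (\<forall>t\<in>{0..1}. Phi ((1-t) *\<^sub>R x + t *\<^sub>R y) \<le> c)
              \<Longrightarrow> (\<forall>t\<in>{0..1}. Phi ((1-t) *\<^sub>R x + t *\<^sub>R y) \<le> max (Phi x) (Phi y))"
    and gc: "continuous_on {0..1} g" and gU: "\<And>s. s \<in> {0..1} \<Longrightarrow> g s \<in> U"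
    and gP: "\<And>s. s \<in> {0..1} \<Longrightarrow> Phi (g s) < c" and g0: "g 0 = x"
  shows "\<forall>t\<in>{0..1}. Phi ((1-t) *\<^sub>R x + t *\<^sub>R g 1) < c"
proof (rule ccontr)
  assume "\<not> ?thesis"
  then obtain t1 where t1: "t1 \<in> {0..1}" "\<not> Phi ((1-t1) *\<^sub>R x + t1 *\<^sub>R g 1) < c" by blast
  define G where "G = (\<lambda>z::real\<times>real. Phi ((1 - snd z) *\<^sub>R x + snd z *\<^sub>R g (fst z)))"
  define Q where "Q = ({0..1::real} \<times> {0..1::real})"
  have xU: "x \<in> U" using gU[of 0] g0 by simp
  have mem: "(1 - snd z) *\<^sub>R x + snd z *\<^sub>R g (fst z) \<in> U" if "z \<in> Q" for z
    using that xU gU[of "fst z"] U unfolding Q_def convex_alt by (auto simp: mem_Times_iff)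
  have Gc: "continuous_on Q G"
    unfolding G_def
  proof (rule continuous_on_compose2[OF cont _ ])
    show "continuous_on Q (\<lambda>z. (1 - snd z) *\<^sub>R x + snd z *\<^sub>R g (fst z))"
      unfolding Q_def
      by (intro continuous_intros continuous_on_compose2[OF gc]) (auto simp: mem_Times_iff)
    show "(\<lambda>z. (1 - snd z) *\<^sub>R x + snd z *\<^sub>R g (fst z)) ` Q \<subseteq> U" using mem by auto
  qed
  define K where "K = {z \<in> Q. c \<le> G z}"
  have "closed K" unfolding K_def
    by (rule continuous_on_closed_Collect_le[OF continuous_on_const Gc]) (simp add: Q_def closed_Times)
  then have "compact K"
  proof -
    have "compact Q" unfolding Q_def by (simp add: compact_Times)
    then have "compact (Q \<inter> K)" using \<open>closed K\<close> by blast
    moreover have "Q \<inter> K = K" unfolding K_def by auto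
    ultimately show ?thesis by simp
  qed
  then have cK: "compact (fst ` K)"
    by (intro compact_continuous_image continuous_on_fst continuous_on_id)
  have "(1, t1) \<in> K" using t1 unfolding K_def Q_def G_def by auto
  then have ne: "fst ` K \<noteq> {}" by blast
  obtain s0 where s0: "s0 \<in> fst ` K" "\<And>s. s \<in> fst ` K \<Longrightarrow> s0 \<le> s"
    using compact_attains_inf[OF cK ne] by blast
  then obtain t0 where t0: "(s0, t0) \<in> K" by force
  have s0r: "s0 \<in> {0..1}" "t0 \<in> {0..1}" "c \<le> G (s0, t0)" using t0 unfolding K_def Q_def by auto
  have "s0 \<noteq> 0"
  proof
    assume "s0 = 0"
    then have "G (s0, t0) = Phi x" unfolding G_def using g0 by (simp add: algebra_simps)
    then show False using s0r gP[of 0] g0 by simp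
  qed
  then have s0p: "0 < s0" using s0r by simp
  have below: "G (s, t) < c" if "s \<in> {0..<s0}" "t \<in> {0..1}" for s t
  proof (rule ccontr)
    assume "\<not> G (s, t) < c"
    then have "(s, t) \<in> K" using that s0r unfolding K_def Q_def by auto
    then have "s0 \<le> s" using s0(2) by force
    then show False using that by simp
  qed
  have le: "G (s0, t) \<le> c" if t: "t \<in> {0..1}" for t
  proof -
    have "continuous_on {0..s0} (\<lambda>s. G (s, t))"
    proof (rule continuous_on_compose2[OF Gc])
      show "continuous_on {0..s0} (\<lambda>s. (s, t))" by (intro continuous_intros)
      show "(\<lambda>s. (s, t)) ` {0..s0} \<subseteq> Q" using s0r t unfolding Q_def by auto
    qed
    then show ?thesis
      using continuous_le_on_closure[of "{0..<s0}" "\<lambda>s. G (s, t)" s0 c] s0p below[OF _ t]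
      by (simp add: less_imp_le)
  qed
  have "\<forall>t\<in>{0..1}. Phi ((1-t) *\<^sub>R x + t *\<^sub>R g s0) \<le> c" using le unfolding G_def by simp
  then have "\<forall>t\<in>{0..1}. Phi ((1-t) *\<^sub>R x + t *\<^sub>R g s0) \<le> max (Phi x) (Phi (g s0))"
    using H gU s0r by blast
  then have "G (s0, t0) \<le> max (Phi x) (Phi (g s0))" using s0r unfolding G_def by simp
  moreover have "max (Phi x) (Phi (g s0)) < c" using gP[of 0] gP[of s0] g0 s0r by simp
  ultimately show False using s0r by simp
qed

lemma K1:
  fixes d :: nat and r :: real and w :: complex
  assumes d: "1 \<le> d" and r: "0 < r" "real d * r < 1" and w: "cmod w < r"
  shows "\<bar>real d * Im (Ln (1 + w))\<bar> < pi / 2"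
proof -
  define a where "a = Re (1 + w)"
  define b where "b = Im (1 + w)"
  have r1: "r < 1" using d r by (metis less_le_trans mult_le_cancel_right1 nat_1_add_1 of_nat_1 of_nat_le_iff not_le order.strict_trans1 order_less_imp_le)
  have "\<bar>Re w\<bar> < r" using abs_Re_le_cmod[of w] w by linarith
  then have ap: "0 < a" unfolding a_def using r1 by simp
  have sq: "(a - 1)^2 + b^2 < r^2"
  proof -
    have "(a - 1)^2 + b^2 = (cmod w)^2" unfolding a_def b_def by (simp add: cmod_power2)
    also have "\<dots> < r^2" using w by (simp add: power_strict_mono)
    finally show ?thesis .
  qed
  have z0: "1 + w \<noteq> 0"
  proof
    assume "1 + w = 0" then have "a = 0" unfolding a_def by simp
    then show False using ap by simp
  qed
  have th: "Im (Ln (1 + w)) = arctan (b / a)"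
    using Arg_eq_Im_Ln[OF z0] arg_conv_arctan[of "1+w"] ap unfolding a_def b_def by simp
  show ?thesis
  proof (cases "d = 1")
    case True
    then show ?thesis using th arctan_bounded[of "b/a"] by auto
  next
    case False
    then have d2: "2 \<le> real d" using d by simp
    have rq: "r^2 < 1/4"
    proof -
      have "2 * r \<le> real d * r" using d2 r by (intro mult_right_mono) auto
      then have "2 * r < 1" using r by linarith
      then have "(2 * r)^2 < 1^2" using r by (intro power_strict_mono) auto
      then show ?thesis by (simp add: power_mult_distrib)
    qed
    have key: "b^2 * (1 - r^2) \<le> r^2 * a^2"
    proof -
      have "r^2 * a^2 - (r^2 - (a-1)^2) * (1 - r^2) = (a - (1 - r^2))^2"
        by (simp add: power2_eq_square algebra_simps)
      moreover have "b^2 * (1 - r^2) \<le> (r^2 - (a-1)^2) * (1 - r^2)"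
        using sq rq by (intro mult_right_mono) auto
      moreover have "0 \<le> (a - (1 - r^2))^2" by simp
      ultimately show ?thesis by linarith
    qed
    define y where "y = b / a"
    have y2: "y^2 * (1 - r^2) \<le> r^2"
    proof -
      have "y^2 * (1 - r^2) = b^2 * (1 - r^2) / a^2" unfolding y_def by (simp add: power_divide)
      also have "\<dots> \<le> r^2 * a^2 / a^2" using key ap by (intro divide_right_mono) auto
      also have "\<dots> = r^2" using ap by simp
      finally show ?thesis .
    qed
    have dr2: "(real d)^2 * r^2 < 1"
    proof -
      have "(real d * r)^2 < 1^2" using r d by (intro power_strict_mono) auto
      then show ?thesis by (simp add: power_mult_distrib)
    qed
    have "(real d)^2 * y^2 * (1 - r^2) \<le> (real d)^2 * r^2"
      using y2 by (simp add: mult.assoc mult_left_mono)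
    then have "(real d)^2 * y^2 * (1 - r^2) < 1" using dr2 by linarith
    then have X: "(real d * y)^2 * (1 - r^2) < 1" by (simp add: power_mult_distrib)
    have "(real d * y)^2 * (3/4) \<le> (real d * y)^2 * (1 - r^2)"
      using rq by (intro mult_left_mono) auto
    then have dy: "(real d * y)^2 < 4/3" using X by linarith
    have "\<bar>real d * y\<bar> < 3/2"
    proof (rule ccontr)
      assume "\<not> ?thesis"
      then have "(3/2)^2 \<le> \<bar>real d * y\<bar>^2" by (intro power_mono) auto
      moreover have "(3/2::real)^2 = 9/4" by (simp add: power2_eq_square)
      ultimately show False using dy by simp
    qed
    moreover have "\<bar>real d * Im (Ln (1 + w))\<bar> \<le> \<bar>real d * y\<bar>"
    proof -
      have "\<bar>Im (Ln (1 + w))\<bar> \<le> \<bar>y\<bar>" using th abs_arctan_le[of y] unfolding y_def by simp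
      then show ?thesis by (simp add: abs_mult mult_left_mono)
    qed
    ultimately show ?thesis using pi_gt3 by linarith
  qed
qed

lemma K2:
  fixes d :: nat and r :: real and w :: complex
  assumes d: "1 \<le> d" and r: "0 < r" "real d * r < 1" and w: "cmod w < r"
  shows "0 < Re ((1 + w)^d)" "Ln ((1 + w)^d) = of_nat d * Ln (1 + w)"
proof -
  have b: "\<bar>real d * Im (Ln (1 + w))\<bar> < pi / 2" by (rule K1[OF assms])
  have z0: "1 + w \<noteq> 0"
  proof
    assume "1 + w = 0" then have "w = -1" by (simp add: add_eq_0_iff)
    then have "cmod w = 1" by simp
    moreover have "r < 1" using d r by (smt (verit) mult_le_cancel_right1 of_nat_1 of_nat_mono)
    ultimately show False using w by simp
  qed
  have e: "(1 + w)^d = exp (of_nat d * Ln (1 + w))"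
    using z0 by (simp add: exp_of_nat_mult)
  have im: "Im (of_nat d * Ln (1 + w)) = real d * Im (Ln (1 + w))" by simp
  show "0 < Re ((1 + w)^d)"
    unfolding e Re_exp using b im by (simp add: cos_gt_zero_pi abs_less_iff)
  show "Ln ((1 + w)^d) = of_nat d * Ln (1 + w)"
    unfolding e using b im pi_gt_zero by (intro Ln_exp) (auto simp: abs_less_iff)
qed

lemma derivB:
  fixes p B z :: complex and d :: nat
  assumes nz: "p + z * B \<notin> \<real>\<^sub>\<le>\<^sub>0" and d: "1 \<le> d"
  shows "((\<lambda>z. exp (Ln (p + z*B) / of_nat d)) has_field_derivative
           exp (Ln (p + z*B) / of_nat d) * (B / (of_nat d * (p + z*B)))) (at z)"
    and "((\<lambda>z. exp (Ln (p + z*B) / of_nat d) * (B / (of_nat d * (p + z*B)))) has_field_derivative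
           (1 - of_nat d) * (B / (of_nat d * (p + z*B)))^2 * exp (Ln (p + z*B) / of_nat d)) (at z)"
proof -
  have P0: "p + z * B \<noteq> 0" using nz by auto
  have d0: "(of_nat d :: complex) \<noteq> 0" using d by simp
  have P1: "p + B * z \<noteq> 0" using P0 by (simp add: mult.commute)
  have P2: "of_nat d * (p + B * z) \<noteq> 0" using P1 d0 by simp
  have P3: "of_nat d * (p + z * B) \<noteq> 0" using P0 d0 by simp
  show "((\<lambda>z. exp (Ln (p + z*B) / of_nat d)) has_field_derivative
           exp (Ln (p + z*B) / of_nat d) * (B / (of_nat d * (p + z*B)))) (at z)"
    apply (rule derivative_eq_intros refl nz d0 P0)+
    using P0 d0 by (simp add: divide_simps P1 P2 mult.commute)
  have dmu: "((\<lambda>z. B / (of_nat d * (p + z*B))) has_field_derivative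
      - of_nat d * (B / (of_nat d * (p + z*B)))^2) (at z)"
    apply (rule derivative_eq_intros refl nz d0 P0 P3)+
    apply (simp only: mult_zero_left mult_zero_right add_0_left add_0_right mult_1_left diff_0)
    by (simp add: power_divide power2_eq_square)
  have dE: "((\<lambda>z. exp (Ln (p + z*B) / of_nat d)) has_field_derivative
           exp (Ln (p + z*B) / of_nat d) * (B / (of_nat d * (p + z*B)))) (at z)"
    apply (rule derivative_eq_intros refl nz d0 P0)+
    using P0 d0 by (simp add: divide_simps P1 P2 mult.commute)
  define m where "m = B / (of_nat d * (p + z*B))"
  define e where "e = exp (Ln (p + z*B) / of_nat d)"
  show "((\<lambda>z. exp (Ln (p + z*B) / of_nat d) * (B / (of_nat d * (p + z*B)))) has_field_derivative
           (1 - of_nat d) * (B / (of_nat d * (p + z*B)))^2 * exp (Ln (p + z*B) / of_nat d)) (at z)"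
  proof (rule DERIV_cong[OF DERIV_mult[OF dE dmu]])
    have "e * m * m + (- of_nat d * m^2) * e = (1 - of_nat d) * m^2 * e"
      by (simp add: algebra_simps power2_eq_square)
    then show "exp (Ln (p + z * B) / of_nat d) * (B / (of_nat d * (p + z * B))) * (B / (of_nat d * (p + z * B))) +
    (- of_nat d * (B / (of_nat d * (p + z * B)))\<^sup>2) * exp (Ln (p + z * B) / of_nat d) =
    (1 - of_nat d) * (B / (of_nat d * (p + z * B)))\<^sup>2 * exp (Ln (p + z * B) / of_nat d)"
      unfolding m_def e_def .
  qed
qed

lemma convex_on_01_max:
  fixes f :: "real \<Rightarrow> real"
  assumes "convex_on {0..1} f" "t \<in> {0..1}"
  shows "f t \<le> max (f 0) (f 1)"
proof -
  have "f ((1 - t) *\<^sub>R 0 + t *\<^sub>R 1) \<le> (1 - t) * f 0 + t * f 1"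
    using assms by (intro convex_onD[OF assms(1)]) auto
  also have "\<dots> \<le> (1 - t) * max (f 0) (f 1) + t * max (f 0) (f 1)"
    using assms(2) by (intro add_mono mult_left_mono) auto
  finally show ?thesis by (simp add: algebra_simps)
qed

lemma ball_comb:
  fixes w1 w2 :: complex
  assumes "cmod w1 < r" "cmod w2 < r" "s \<in> {0..1}"
  shows "cmod ((1 - s) *\<^sub>R w1 + s *\<^sub>R w2) < r"
proof -
  have "w1 \<in> ball 0 r" "w2 \<in> ball 0 r" using assms by auto
  then have "(1 - s) *\<^sub>R w1 + s *\<^sub>R w2 \<in> ball 0 r"
    using convex_ball[of "0::complex" r] assms(3) unfolding convex_alt by auto
  then show ?thesis by simp
qed

lemma convB:
  fixes d :: nat and r :: real
  assumes d: "1 \<le> d" and r: "0 < r" "real d * r < 1"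
  shows "convex {(1 + w)^d | w. cmod w < r}"
  unfolding convex_alt
proof (intro ballI allI impI)
  fix p q :: complex and u :: real
  assume "p \<in> {(1 + w)^d | w. cmod w < r}" "q \<in> {(1 + w)^d | w. cmod w < r}" and u: "0 \<le> u \<and> u \<le> 1"
  then obtain w1 w2 where w1: "cmod w1 < r" "p = (1 + w1)^d" and w2: "cmod w2 < r" "q = (1 + w2)^d" by blast
  define Phi where "Phi = (\<lambda>p::complex. (cmod (exp (Ln p / of_nat d) - 1))^2)"
  define U where "U = {p::complex. 0 < Re p}"
  have d0: "(of_nat d :: complex) \<noteq> 0" using d by simp
  have Phiw: "Phi ((1 + w)^d) = (cmod w)^2" if "cmod w < r" for w
  proof -
    have "Ln ((1 + w)^d) = of_nat d * Ln (1 + w)" by (rule K2(2)[OF d r that])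
    moreover have "1 + w \<noteq> 0"
    proof
      assume "1 + w = 0"
      then have "(1 + w)^d = 0" using d by simp
      then have "Re ((1 + w)^d) = 0" by simp
      then show False using K2(1)[OF d r that] by simp
    qed
    ultimately show ?thesis unfolding Phi_def using d0 by simp
  qed
  have UnR: "z \<notin> \<real>\<^sub>\<le>\<^sub>0" if "z \<in> U" for z using that unfolding U_def by (auto simp: complex_nonpos_Reals_iff)
  have convU: "convex U" unfolding U_def by (rule convex_halfspace_Re_gt)
  have contP: "continuous_on U Phi" unfolding Phi_def
    using UnR d by (intro continuous_intros) auto
  define g where "g = (\<lambda>s::real. (1 + ((1 - s) *\<^sub>R w1 + s *\<^sub>R w2))^d)"
  have gb: "cmod ((1 - s) *\<^sub>R w1 + s *\<^sub>R w2) < r" if "s \<in> {0..1}" for s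
    using ball_comb[OF w1(1) w2(1) that] .
  have H: "\<forall>t\<in>{0..1}. Phi ((1-t) *\<^sub>R p + t *\<^sub>R y) \<le> max (Phi p) (Phi y)"
    if yU: "y \<in> U" and hy: "\<forall>t\<in>{0..1}. Phi ((1-t) *\<^sub>R p + t *\<^sub>R y) \<le> r^2" for y
  proof -
    have pU: "p \<in> U" unfolding U_def w1(2) using K2(1)[OF d r w1(1)] by simp
    define B where "B = y - p"
    have segeq: "(1-t) *\<^sub>R p + t *\<^sub>R y = p + of_real t * B" for t
      unfolding B_def by (simp add: scaleR_conv_of_real algebra_simps)
    have segU: "p + of_real t * B \<in> U" if "t \<in> {0..1}" for t
      using convU pU yU that unfolding convex_alt segeq[symmetric] by auto
    define E where "E = (\<lambda>z. exp (Ln (p + z*B) / of_nat d))"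
    define mu where "mu = (\<lambda>z. B / (of_nat d * (p + z*B)))"
    have cv: "convex_on {0..1} (\<lambda>t. (cmod (E (of_real t) - 1))^2)"
    proof (rule seg_convex[where mu = mu and k = "1 - of_nat d"])
      fix t :: real assume t: "t \<in> {0..1}"
      have nz: "p + of_real t * B \<notin> \<real>\<^sub>\<le>\<^sub>0" using UnR segU t by blast
      show "(E has_field_derivative E (of_real t) * mu (of_real t)) (at (of_real t))"
        unfolding E_def mu_def by (rule derivB(1)[OF nz d])
      show "((\<lambda>z. E z * mu z) has_field_derivative (1 - of_nat d) * (mu (of_real t))^2 * E (of_real t)) (at (of_real t))"
        unfolding E_def mu_def by (rule derivB(2)[OF nz d])
      have "(cmod (E (of_real t) - 1))^2 \<le> r^2"
        using hy t unfolding Phi_def E_def segeq by auto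
      then have e1: "cmod (E (of_real t) - 1) \<le> r" using r by (simp add: abs_le_square_iff[symmetric] power2_le_iff_abs_le)
      have k: "cmod (1 - of_nat d :: complex) = real d - 1"
      proof -
        have "(1 - of_nat d :: complex) = - of_real (real d - 1)" by simp
        then show ?thesis using d by (simp only: norm_minus_cancel norm_of_real)
      qed
      have "real d * cmod (E (of_real t) - 1) \<le> real d * r" using e1 by (simp add: mult_left_mono)
      moreover have "1 \<le> cmod (E (of_real t)) + cmod (E (of_real t) - 1)"
        using norm_triangle_ineq4[of "E (of_real t)" "E (of_real t) - 1"] by simp
      ultimately show "cmod (1 - of_nat d :: complex) * cmod (E (of_real t) - 1) \<le> cmod (E (of_real t))"
        unfolding k using r by (simp add: algebra_simps)
    qed
    have "(\<lambda>t. (cmod (E (of_real t) - 1))^2) = (\<lambda>t. Phi ((1-t) *\<^sub>R p + t *\<^sub>R y))"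
      by (rule ext) (simp add: Phi_def E_def segeq)
    then have cv': "convex_on {0..1} (\<lambda>t. Phi ((1-t) *\<^sub>R p + t *\<^sub>R y))" using cv by simp
    show ?thesis using convex_on_01_max[OF cv'] by simp
  qed
  have res: "\<forall>t\<in>{0..1}. Phi ((1-t) *\<^sub>R p + t *\<^sub>R g 1) < r^2"
  proof (rule two_param[where U = U])
    show "convex U" by (rule convU)
    show "continuous_on U Phi" by (rule contP)
    show "continuous_on {0..1} g" unfolding g_def by (intro continuous_intros)
    show "g s \<in> U" if "s \<in> {0..1}" for s
      unfolding g_def U_def using K2(1)[OF d r gb[OF that]] by simp
    show "Phi (g s) < r^2" if "s \<in> {0..1}" for s
      unfolding g_def using Phiw[OF gb[OF that]] gb[OF that] by (simp add: power_strict_mono)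
    show "g 0 = p" unfolding g_def w1 by simp
  qed (use H in blast)
  have g1: "g 1 = q" unfolding g_def w2 by simp
  define m where "m = (1 - u) *\<^sub>R p + u *\<^sub>R q"
  have mP: "Phi m < r^2" using res u unfolding m_def g1 by auto
  have mU: "m \<in> U"
  proof -
    have "p \<in> U" "q \<in> U" unfolding U_def w1(2) w2(2) using K2(1)[OF d r w1(1)] K2(1)[OF d r w2(1)] by auto
    then show ?thesis using convU u unfolding convex_alt m_def by blast
  qed
  define w where "w = exp (Ln m / of_nat d) - 1"
  have "(cmod w)^2 < r^2" using mP unfolding Phi_def w_def .
  then have wr: "cmod w < r" using r by (simp add: power_less_imp_less_base)
  have m0: "m \<noteq> 0" using mU unfolding U_def by auto
  have "(1 + w)^d = exp (Ln m / of_nat d)^d" unfolding w_def by simp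
  also have "\<dots> = exp (of_nat d * (Ln m / of_nat d))" by (rule exp_of_nat_mult[symmetric])
  also have "\<dots> = m" using d0 m0 by simp
  finally show "(1 - u) *\<^sub>R p + u *\<^sub>R q \<in> {(1 + w)^d | w. cmod w < r}"
    using wr unfolding m_def by (simp only: mem_Collect_eq) (metis)
qed

lemma convA:
  fixes r :: real
  assumes r: "0 < r" "r \<le> 1/2"
  shows "convex {z::complex. \<bar>Im z\<bar> < pi/2 \<and> cmod (exp z - 1) < r}"
  unfolding convex_alt
proof (intro ballI allI impI)
  fix xi eta :: complex and u :: real
  assume xi: "xi \<in> {z::complex. \<bar>Im z\<bar> < pi/2 \<and> cmod (exp z - 1) < r}"
    and eta: "eta \<in> {z::complex. \<bar>Im z\<bar> < pi/2 \<and> cmod (exp z - 1) < r}" and u: "0 \<le> u \<and> u \<le> 1"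
  define Phi where "Phi = (\<lambda>z::complex. (cmod (exp z - 1))^2)"
  define m where "m = (1 - u) *\<^sub>R xi + u *\<^sub>R eta"
  have imm: "\<bar>Im m\<bar> < pi/2"
  proof -
    have "Im m = (1 - u) * Im xi + u * Im eta" unfolding m_def by simp
    moreover have "\<bar>(1 - u) * Im xi + u * Im eta\<bar> \<le> (1 - u) * \<bar>Im xi\<bar> + u * \<bar>Im eta\<bar>"
    proof -
      have "\<bar>(1 - u) * Im xi + u * Im eta\<bar> \<le> \<bar>(1 - u) * Im xi\<bar> + \<bar>u * Im eta\<bar>" by (rule abs_triangle_ineq)
      also have "\<dots> = (1 - u) * \<bar>Im xi\<bar> + u * \<bar>Im eta\<bar>" using u by (simp add: abs_mult)
      finally show ?thesis .
    qed
    moreover have "(1 - u) * \<bar>Im xi\<bar> + u * \<bar>Im eta\<bar> \<le> (1 - u) * (pi/2) + u * \<bar>Im eta\<bar>"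
      using u xi by (intro add_right_mono mult_left_mono) auto
    moreover have "u * \<bar>Im eta\<bar> \<le> u * (pi/2)" using u eta by (intro mult_left_mono) auto
    moreover have "(1 - u) * \<bar>Im xi\<bar> + u * \<bar>Im eta\<bar> < pi/2"
    proof (cases "u = 0")
      case True then show ?thesis using xi by simp
    next
      case False
      then have "u * \<bar>Im eta\<bar> < u * (pi/2)" using u eta by (intro mult_strict_left_mono) auto
      moreover have "(1 - u) * \<bar>Im xi\<bar> \<le> (1 - u) * (pi/2)" using u xi by (intro mult_left_mono) auto
      ultimately show ?thesis by (simp add: algebra_simps)
    qed
    ultimately show ?thesis by linarith
  qed
  have rep: "0 < Re (exp z)" if "\<bar>Im z\<bar> < pi/2" for z
    using that by (simp add: Re_exp cos_gt_zero_pi abs_less_iff)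
  define g where "g = (\<lambda>s::real. Ln ((1 - s) *\<^sub>R exp xi + s *\<^sub>R exp eta))"
  have combRe: "0 < Re ((1 - s) *\<^sub>R exp xi + s *\<^sub>R exp eta)" if "s \<in> {0..1}" for s
  proof -
    have "exp xi \<in> {z. Re z > 0}" "exp eta \<in> {z. Re z > 0}" using rep xi eta by auto
    then show ?thesis using convex_halfspace_Re_gt[of 0] that unfolding convex_alt by auto
  qed
  have res: "\<forall>t\<in>{0..1}. Phi ((1-t) *\<^sub>R xi + t *\<^sub>R g 1) < r^2"
  proof (rule two_param[where U = UNIV])
    show "convex (UNIV :: complex set)" by simp
    show "continuous_on UNIV Phi" unfolding Phi_def by (intro continuous_intros)
    show "continuous_on {0..1} g" unfolding g_def
    proof (intro continuous_intros)
      fix z assume "z \<in> {0..1::real}"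
      then have "0 < Re ((1 - z) *\<^sub>R exp xi + z *\<^sub>R exp eta)" by (rule combRe)
      then show "(1 - z) *\<^sub>R exp xi + z *\<^sub>R exp eta \<notin> \<real>\<^sub>\<le>\<^sub>0"
        unfolding complex_nonpos_Reals_iff by linarith
    qed
    show "g s \<in> UNIV" for s by simp
    show "Phi (g s) < r^2" if s: "s \<in> {0..1}" for s
    proof -
      have nz: "(1 - s) *\<^sub>R exp xi + s *\<^sub>R exp eta \<noteq> 0"
      proof
        assume "(1 - s) *\<^sub>R exp xi + s *\<^sub>R exp eta = 0"
        then have "Re ((1 - s) *\<^sub>R exp xi + s *\<^sub>R exp eta) = 0" by simp
        then show False using combRe[OF s] by linarith
      qed
      have "(1 - s) *\<^sub>R exp xi + s *\<^sub>R exp eta - 1 = (1 - s) *\<^sub>R (exp xi - 1) + s *\<^sub>R (exp eta - 1)"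
        by (simp add: algebra_simps scaleR_conv_of_real)
      then have "cmod ((1 - s) *\<^sub>R exp xi + s *\<^sub>R exp eta - 1) < r"
        using ball_comb[of "exp xi - 1" r "exp eta - 1" s] xi eta s by simp
      then show ?thesis unfolding Phi_def g_def using nz r by (simp add: power_strict_mono)
    qed
    show "g 0 = xi" unfolding g_def using xi pi_gt_zero by simp (intro Ln_exp; auto simp: abs_less_iff)
  next
    fix y :: complex
    assume hy: "\<forall>t\<in>{0..1}. Phi ((1-t) *\<^sub>R xi + t *\<^sub>R y) \<le> r^2"
    define B where "B = y - xi"
    have segeq: "(1-t) *\<^sub>R xi + t *\<^sub>R y = xi + of_real t * B" for t
      unfolding B_def by (simp add: scaleR_conv_of_real algebra_simps)
    define E where "E = (\<lambda>z. exp (xi + z * B))"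
    have cv: "convex_on {0..1} (\<lambda>t. (cmod (E (of_real t) - 1))^2)"
    proof (rule seg_convex[where mu = "\<lambda>_. B" and k = 1])
      fix t :: real assume t: "t \<in> {0..1}"
      show "(E has_field_derivative E (of_real t) * B) (at (of_real t))"
        unfolding E_def by (rule derivative_eq_intros refl | simp)+
      show "((\<lambda>z. E z * B) has_field_derivative 1 * B^2 * E (of_real t)) (at (of_real t))"
        unfolding E_def by (rule derivative_eq_intros refl | simp add: power2_eq_square)+
      have "(cmod (E (of_real t) - 1))^2 \<le> r^2"
        using hy t unfolding Phi_def E_def segeq by auto
      then have e1: "cmod (E (of_real t) - 1) \<le> r" using r by (simp add: power2_le_iff_abs_le)
      have "1 \<le> cmod (E (of_real t)) + cmod (E (of_real t) - 1)"
        using norm_triangle_ineq4[of "E (of_real t)" "E (of_real t) - 1"] by simp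
      then show "cmod (1::complex) * cmod (E (of_real t) - 1) \<le> cmod (E (of_real t))"
        using e1 r by simp
    qed
    have "(\<lambda>t. (cmod (E (of_real t) - 1))^2) = (\<lambda>t. Phi ((1-t) *\<^sub>R xi + t *\<^sub>R y))"
      by (rule ext) (simp add: Phi_def E_def segeq)
    then have cv': "convex_on {0..1} (\<lambda>t. Phi ((1-t) *\<^sub>R xi + t *\<^sub>R y))" using cv by simp
    show "\<forall>t\<in>{0..1}. Phi ((1-t) *\<^sub>R xi + t *\<^sub>R y) \<le> max (Phi xi) (Phi y)"
      using convex_on_01_max[OF cv'] by simp
  qed
  have g1: "g 1 = eta" unfolding g_def using eta pi_gt_zero by simp (intro Ln_exp; auto simp: abs_less_iff)
  have "Phi m < r^2" using res u unfolding m_def g1 by auto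
  then have "cmod (exp m - 1) < r" unfolding Phi_def using r by (simp add: power_less_imp_less_base)
  then show "(1 - u) *\<^sub>R xi + u *\<^sub>R eta \<in> {z::complex. \<bar>Im z\<bar> < pi/2 \<and> cmod (exp z - 1) < r}"
    using imm unfolding m_def by simp
qed

theorem lemma2p4:
  fixes d :: nat and r :: real
  assumes "0 < r" and "r < 1 / real d"
  shows "convex (disk_pow 1 r d)"
proof -
  have d0: "d \<noteq> 0"
  proof
    assume "d = 0" then show False using assms by simp
  qed
  then have d: "1 \<le> d" by simp
  have dr: "real d * r < 1"
    using assms d0 by (simp add: field_simps)
  have eq: "disk_pow 1 r d = {(1 + w)^d | w. cmod w < r}"
  proof
    show "{(1 + w)^d | w. cmod w < r} \<subseteq> disk_pow 1 r d"
    proof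
      fix z assume "z \<in> {(1 + w)^d | w. cmod w < r}"
      then obtain w where w: "cmod w < r" "z = (1 + w)^d" by blast
      have "z = (\<Prod>i<d. (\<lambda>_. 1 + w) i)" using w by simp
      moreover have "\<forall>i<d. (\<lambda>_. 1 + w) i \<in> ball 1 r" using w by (simp add: dist_norm)
      ultimately show "z \<in> disk_pow 1 r d" unfolding disk_pow_def by blast
    qed
  next
    show "disk_pow 1 r d \<subseteq> {(1 + w)^d | w. cmod w < r}"
    proof
      fix z assume "z \<in> disk_pow 1 r d"
      then obtain b where z: "z = (\<Prod>i<d. b i)" and b: "\<forall>i<d. b i \<in> ball 1 r"
        unfolding disk_pow_def by blast
      have bn: "cmod (b i - 1) < r" if "i < d" for i
        using b that by (simp add: dist_norm norm_minus_commute)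
      show "z \<in> {(1 + w)^d | w. cmod w < r}"
      proof (cases "d = 1")
        case True
        then have "z = (1 + (b 0 - 1))^d" using z by simp
        moreover have "cmod (b 0 - 1) < r" using bn True by simp
        ultimately show ?thesis by blast
      next
        case False
        then have d2: "2 \<le> real d" using d by simp
        have "2 * r \<le> real d * r" using d2 assms by (intro mult_right_mono) auto
        then have r2: "r \<le> 1/2" using dr by simp
        define L where "L = {z::complex. \<bar>Im z\<bar> < pi/2 \<and> cmod (exp z - 1) < r}"
        have cL: "convex L" unfolding L_def by (rule convA[OF assms(1) r2])
        have r1: "r < 1" using r2 by simp
        have bre: "0 < Re (b i)" if "i < d" for i
        proof -
          have "\<bar>Re (b i - 1)\<bar> < r" using abs_Re_le_cmod[of "b i - 1"] bn[OF that] by linarith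
          then show ?thesis using r1 by simp
        qed
        have bz: "b i \<noteq> 0" if "i < d" for i using bre[OF that] by auto
        have zL: "Ln (b i) \<in> L" if "i < d" for i
        proof -
          have "Im (Ln (b i)) = arctan (Im (b i) / Re (b i))"
            using Arg_eq_Im_Ln[OF bz[OF that]] arg_conv_arctan[OF bre[OF that]] by simp
          then have "\<bar>Im (Ln (b i))\<bar> < pi/2" using arctan_bounded[of "Im (b i) / Re (b i)"] by auto
          then show ?thesis unfolding L_def using bz[OF that] bn[OF that] by simp
        qed
        define zb where "zb = (\<Sum>i<d. (1 / real d) *\<^sub>R Ln (b i))"
        have "zb \<in> L" unfolding zb_def
          by (rule convex_sum[OF _ cL]) (use zL d0 in auto)
        then have zbL: "cmod (exp zb - 1) < r" unfolding L_def by simp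
        have "(1 + (exp zb - 1))^d = exp zb ^ d" by simp
        also have "\<dots> = exp (of_nat d * zb)" by (rule exp_of_nat_mult[symmetric])
        also have "of_nat d * zb = (\<Sum>i<d. Ln (b i))"
          unfolding zb_def using d0 by (simp add: sum_distrib_left scaleR_conv_of_real)
        also have "exp (\<Sum>i<d. Ln (b i)) = (\<Prod>i<d. exp (Ln (b i)))" by (simp add: exp_sum)
        also have "\<dots> = (\<Prod>i<d. b i)" using bz by (intro prod.cong) auto
        finally have "z = (1 + (exp zb - 1))^d" using z by simp
        then show ?thesis using zbL by blast
      qed
    qed
  qed
  show ?thesis unfolding eq by (rule convB[OF d assms(1) dr])
qed

end
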